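(* Let $G$ be a finitely generated infinite group and let $V$ be a finite-dimensional vector space. Let $\tau\in\mathrm{LNUCA}_c(G,V)$ be stably injective and let $\Gamma=\tau(V^G)$. Then there exists a finite subset $N\subset G$ such that for every $d\in\Gamma$ and every $g\in G$, the element $\tau^{-1}(d)(g)\in V$ depends only on the restriction $d\vert_{gN}$.
   Context: For $g\in G$ and $x\in V^G$, $(gx)(h)=x(g^{-1}h)$. For finite $M\subset G$, $S=\mathcal{L}(V^M,V)$ and $s\in S^G$, $\sigma_s\colon V^G\to V^G$ is $\sigma_s(x)(g)=s(g)((g^{-1}x)\vert_M)$. $\mathrm{LNUCA}_c(G,V)$ is the set of maps $\sigma_s$ with $M$ finite and $s$ constant outside some finite subset of $G$. For $s\in S^G$, $\Sigma(s)$ is the closure of $\{gs:g\in G\}$ in $S^G$ for the prodiscrete topology (with $(gs)(h)=s(g^{-1}h)$). $\tau=\sigma_s$ is stably injective if $\sigma_p$ is injective for every $p\in\Sigma(s)$ (in particular $\tau$ is injective, so $\tau^{-1}(d)$ is well defined for $d\in\Gamma$). *)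

theory Defs
  imports "HOL-Analysis.Analysis" "HOL-Library.Function_Algebras"
begin

text \<open>Groups are written additively (type class group_add, not necessarily
commutative): g h is written g + h and g inverse is written - g.\<close>

inductive_set gen_subgroup :: "'g::group_add set \<Rightarrow> 'g set" for A where
  gen_zero: "0 \<in> gen_subgroup A"
| gen_base: "a \<in> A \<Longrightarrow> a \<in> gen_subgroup A"
| gen_add: "x \<in> gen_subgroup A \<Longrightarrow> y \<in> gen_subgroup A \<Longrightarrow> x + y \<in> gen_subgroup A"
| gen_uminus: "x \<in> gen_subgroup A \<Longrightarrow> - x \<in> gen_subgroup A"

definition finitely_generated_group :: "'g::group_add itself \<Rightarrow> bool" where
  "finitely_generated_group _ \<longleftrightarrow> (\<exists>A::'g set. finite A \<and> gen_subgroup A = UNIV)"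

definition shift :: "'g::group_add \<Rightarrow> ('g \<Rightarrow> 'a) \<Rightarrow> ('g \<Rightarrow> 'a)" where
  "shift g x = (\<lambda>h. x (- g + h))"

text \<open>Restriction x|_M, representing V^M as configurations vanishing outside M.\<close>
definition restr :: "'g set \<Rightarrow> ('g \<Rightarrow> 'v::zero) \<Rightarrow> ('g \<Rightarrow> 'v)" where
  "restr M x = (\<lambda>h. if h \<in> M then x h else 0)"

text \<open>S = L(V^M, V): linear maps on configurations that only depend on the
restriction to M (these are in bijection with linear maps V^M \<rightarrow> V).\<close>
definition lin_maps :: "('k::field \<Rightarrow> 'v::ab_group_add \<Rightarrow> 'v) \<Rightarrow> 'g set
    \<Rightarrow> ((('g \<Rightarrow> 'v) \<Rightarrow> 'v) set)" where
  "lin_maps sc M = {f. Vector_Spaces.linear (\<lambda>c x h. sc c (x h)) sc f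
                          \<and> (\<forall>x. f x = f (restr M x))}"

definition sigma :: "'g::group_add set \<Rightarrow> ('g \<Rightarrow> ('g \<Rightarrow> 'v::zero) \<Rightarrow> 'v)
    \<Rightarrow> ('g \<Rightarrow> 'v) \<Rightarrow> ('g \<Rightarrow> 'v)" where
  "sigma M s x = (\<lambda>g. s g (restr M (shift (- g) x)))"

definition orbit_closure :: "'a set \<Rightarrow> ('g::group_add \<Rightarrow> 'a) \<Rightarrow> ('g \<Rightarrow> 'a) set" where
  "orbit_closure S s = (product_topology (\<lambda>_. discrete_topology S) UNIV)
                          closure_of (range (\<lambda>g. shift g s))"

definition stably_injective ::
  "('k::field \<Rightarrow> 'v::ab_group_add \<Rightarrow> 'v) \<Rightarrow> 'g::group_add set \<Rightarrow> ('g \<Rightarrow> ('g \<Rightarrow> 'v) \<Rightarrow> 'v) \<Rightarrow> bool" where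
  "stably_injective sc M s \<longleftrightarrow> (\<forall>p \<in> orbit_closure (lin_maps sc M) s. inj (sigma M p))"

end

theory Submission
  imports Defs
begin

lemma orbit_closureI:
  assumes sS: "\<And>g. s g \<in> S" and pS: "\<And>h. p h \<in> S"
    and fin: "\<And>F. finite F \<Longrightarrow> \<exists>g. \<forall>i\<in>F. shift g s i = p i"
  shows "p \<in> orbit_closure S s"
  unfolding orbit_closure_def closure_of_def
proof (intro CollectI conjI allI impI)
  show "p \<in> topspace (product_topology (\<lambda>_. discrete_topology S) UNIV)"
    using pS by (simp add: PiE_UNIV_domain)
next
  fix T assume T: "p \<in> T \<and> openin (product_topology (\<lambda>_. discrete_topology S) UNIV) T"
  then obtain U where U: "finite {i. U i \<noteq> S}" "p \<in> Pi\<^sub>E UNIV U" "Pi\<^sub>E UNIV U \<subseteq> T"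
    "\<forall>i. openin (discrete_topology S) (U i)"
    unfolding openin_product_topology_alt by force
  obtain g where g: "\<forall>i\<in>{i. U i \<noteq> S}. shift g s i = p i" using fin[OF U(1)] by blast
  have "shift g s \<in> Pi\<^sub>E UNIV U"
  proof -
    have "shift g s i \<in> U i" for i
    proof (cases "U i = S")
      case True then show ?thesis by (simp add: shift_def sS)
    next
      case False then show ?thesis using g U(2) by (auto simp: PiE_UNIV_domain)
    qed
    then show ?thesis by (simp add: PiE_UNIV_domain)
  qed
  then show "\<exists>y\<in>range (\<lambda>g. shift g s). y \<in> T" using U(3) by blast
qed

lemma sum_list_rev_uminus:
  "sum_list (rev (map uminus l)) = - sum_list (l :: 'g::group_add list)"
  by (induction l) (auto simp: minus_add)

lemma fg_countable:
  assumes "finitely_generated_group TYPE('g::group_add)"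
  shows "countable (UNIV :: 'g set)"
proof -
  obtain A :: "'g set" where A: "finite A" "gen_subgroup A = UNIV"
    using assms unfolding finitely_generated_group_def by blast
  have "x \<in> sum_list ` lists (A \<union> uminus ` A)" if "x \<in> gen_subgroup A" for x
    using that
  proof (induction rule: gen_subgroup.induct)
    case gen_zero
    then show ?case by (metis image_eqI lists.Nil sum_list.Nil)
  next
    case (gen_base a)
    then show ?case by (intro image_eqI[of _ _ "[a]"]) auto
  next
    case (gen_add x y)
    then obtain l1 l2 where "l1 \<in> lists (A \<union> uminus ` A)" "l2 \<in> lists (A \<union> uminus ` A)"
      "x = sum_list l1" "y = sum_list l2" by blast
    then show ?case by (intro image_eqI[of _ _ "l1 @ l2"]) auto
  next
    case (gen_uminus x)
    then obtain l where l: "l \<in> lists (A \<union> uminus ` A)" "x = sum_list l" by blast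
    have "rev (map uminus l) \<in> lists (A \<union> uminus ` A)"
      using l(1) by (auto simp: image_iff) (metis minus_minus)
    then show ?case using l(2) sum_list_rev_uminus[of l] by (intro image_eqI[of _ _ "rev (map uminus l)"]) auto
  qed
  then have "UNIV \<subseteq> sum_list ` lists (A \<union> uminus ` A)" using A(2) by blast
  moreover have "countable (sum_list ` lists (A \<union> uminus ` A))"
    using A(1) by (intro countable_image countable_lists countable_finite) auto
  ultimately show ?thesis using countable_subset by blast
qed

context vector_space begin
lemma subspace_eq_dim_fin:
  assumes "subspace S" "subspace T" "S \<subseteq> T" "T \<subseteq> span W" "finite W" "dim T \<le> dim S"
  shows "S = T"
proof -
  obtain Bs where Bs: "Bs \<subseteq> S" "independent Bs" "S \<subseteq> span Bs" "card Bs = dim S"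
    using basis_exists by blast
  have finBs: "finite Bs" using independent_span_bound[OF assms(5) Bs(2)] Bs(1) assms(3,4) by blast
  obtain Bt where Bt: "Bt \<subseteq> T" "independent Bt" "T \<subseteq> span Bt" "card Bt = dim T"
    using basis_exists by blast
  have finBt: "finite Bt" using independent_span_bound[OF assms(5) Bt(2)] Bt(1) assms(4) by blast
  have "T \<subseteq> span Bs"
  proof
    fix t assume t: "t \<in> T"
    show "t \<in> span Bs"
    proof (rule ccontr)
      assume nt: "t \<notin> span Bs"
      have ind: "independent (insert t Bs)" using independent_insertI[OF nt Bs(2)] .
      have "insert t Bs \<subseteq> span Bt" using Bt(3) Bs(1) assms(3) t by blast
      then have "card (insert t Bs) \<le> card Bt" using independent_span_bound[OF finBt ind] by blast
      moreover have "t \<notin> Bs" using nt span_base by blast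
      then have "card (insert t Bs) = card Bs + 1" using finBs by simp
      ultimately show False using Bs(4) Bt(4) assms(6) by simp
    qed
  qed
  then show ?thesis using span_minimal[OF Bs(1) assms(1)] assms(3) by blast
qed
end


lemma vs_fun:
  assumes "vector_space sc"
  shows "vector_space (\<lambda>c (x::'g \<Rightarrow> 'v::ab_group_add) h. sc c (x h))"
proof -
  interpret V: vector_space sc by fact
  show ?thesis
    by unfold_locales (auto simp: fun_eq_iff V.scale_right_distrib V.scale_left_distrib)
qed

lemma lin_maps_hom:
  assumes "f \<in> lin_maps sc M"
  shows "module_hom (\<lambda>c x h. sc c (x h)) sc f"
  using assms unfolding lin_maps_def by (simp add: linear_iff_module_hom)

lemma lin_maps_add: "f \<in> lin_maps sc M \<Longrightarrow> f (x + y) = f x + f y"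
  using lin_maps_hom module_hom.add by fastforce
lemma lin_maps_diff: "f \<in> lin_maps sc M \<Longrightarrow> f (x - y) = f x - f y"
  using lin_maps_hom module_hom.diff by fastforce
lemma lin_maps_zero: "f \<in> lin_maps sc M \<Longrightarrow> f 0 = 0"
  using lin_maps_hom module_hom.zero by fastforce
lemma lin_maps_scale: "f \<in> lin_maps sc M \<Longrightarrow> f (\<lambda>h. sc c (x h)) = sc c (f x)"
  using lin_maps_hom[of f sc M] module_hom.scale[of "\<lambda>c x h. sc c (x h)" sc f c x] by simp
lemma lin_maps_restr: "f \<in> lin_maps sc M \<Longrightarrow> f (restr M x) = f x"
  unfolding lin_maps_def by simp

lemma sigma_alt: "p g \<in> lin_maps sc M \<Longrightarrow> sigma M p x g = p g (shift (- g) x)"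
  unfolding sigma_def by (simp add: lin_maps_restr)

lemma shift_diff: "shift g (x - y) = shift g x - shift g y"
  by (simp add: shift_def fun_eq_iff)
lemma shift_add: "shift g (x + y) = shift g x + shift g y"
  by (simp add: shift_def fun_eq_iff)
lemma shift_zero: "shift g 0 = 0"
  by (simp add: shift_def fun_eq_iff)
lemma shift_scale: "shift g (\<lambda>h. sc c (x h)) = (\<lambda>h. sc c (shift g x h))"
  by (simp add: shift_def fun_eq_iff)

lemma sigma_diff: "p g \<in> lin_maps sc M \<Longrightarrow> sigma M p (x - y) g = sigma M p x g - sigma M p y g"
  by (simp only: sigma_alt shift_diff lin_maps_diff)

lemma sigma_add: "p g \<in> lin_maps sc M \<Longrightarrow> sigma M p (x + y) g = sigma M p x g + sigma M p y g"
  by (simp only: sigma_alt shift_add lin_maps_add)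

lemma sigma_zero: "p g \<in> lin_maps sc M \<Longrightarrow> sigma M p 0 g = 0"
  by (simp only: sigma_alt shift_zero lin_maps_zero)

lemma sigma_scale: "p g \<in> lin_maps sc M \<Longrightarrow> sigma M p (\<lambda>h. sc c (x h)) g = sc c (sigma M p x g)"
  by (simp only: sigma_alt shift_scale lin_maps_scale)

lemma sigma_local:
  assumes "\<forall>m\<in>M. x (g + m) = y (g + m)"
  shows "sigma M p x g = sigma M p y g"
proof -
  have "restr M (shift (- g) x) = restr M (shift (- g) y)"
    using assms by (auto simp: restr_def shift_def fun_eq_iff)
  then show ?thesis by (simp add: sigma_def)
qed

lemma sigma_shift:
  "sigma M (\<lambda>h. p (g + h)) (\<lambda>h. x (g + h)) h = sigma M p x (g + h)"
  by (simp add: sigma_def shift_def add.assoc)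

lemma fin_span:
  assumes fd: "finite_dimensional_vector_space sc B" and C: "finite C"
  shows "\<exists>W. finite W \<and> {x::'g \<Rightarrow> 'v::ab_group_add. \<forall>h. h \<notin> C \<longrightarrow> x h = 0}
            \<subseteq> module.span (\<lambda>c x h. sc c (x h)) W"
proof -
  interpret V: finite_dimensional_vector_space sc B by fact
  interpret VF: vector_space "\<lambda>c (x::'g \<Rightarrow> 'v) h. sc c (x h)"
    by (rule vs_fun) unfold_locales
  define del where "del a v = (\<lambda>h. if h = a then v else (0::'v))" for a :: 'g and v
  have hom: "module_hom sc (\<lambda>c (x::'g \<Rightarrow> 'v) h. sc c (x h)) (del a)" for a
    unfolding module_hom_iff
    using V.module_axioms VF.module_axioms
    by (auto simp: del_def fun_eq_iff)
  have dspan: "del a v \<in> VF.span (del a ` B)" for a v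
    using module_hom.span_image[OF hom[of a], of B] V.span_Basis by auto
  have "\<forall>x. (\<forall>h. h \<notin> C \<longrightarrow> x h = 0) \<longrightarrow> x \<in> VF.span ((\<lambda>(a,b). del a b) ` (C \<times> B))"
    using C
  proof (induction C rule: finite_induct)
    case empty
    then show ?case by (auto simp: VF.span_zero zero_fun_def[symmetric] fun_eq_iff)
  next
    case (insert a C)
    show ?case
    proof (intro allI impI)
      fix x :: "'g \<Rightarrow> 'v" assume x: "\<forall>h. h \<notin> insert a C \<longrightarrow> x h = 0"
      have e: "x = restr C x + del a (x a)"
        using x insert(2) by (auto simp: restr_def del_def fun_eq_iff)
      have "restr C x \<in> VF.span ((\<lambda>(a,b). del a b) ` (C \<times> B))"
        using insert(3) by (auto simp: restr_def)
      also have "\<dots> \<subseteq> VF.span ((\<lambda>(a,b). del a b) ` (insert a C \<times> B))"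
        by (intro VF.span_mono) auto
      finally have 1: "restr C x \<in> \<dots>" .
      have "del a (x a) \<in> VF.span (del a ` B)" by (rule dspan)
      also have "\<dots> \<subseteq> VF.span ((\<lambda>(a,b). del a b) ` (insert a C \<times> B))"
        by (intro VF.span_mono) auto
      finally have 2: "del a (x a) \<in> \<dots>" .
      show "x \<in> VF.span ((\<lambda>(a,b). del a b) ` (insert a C \<times> B))"
        using VF.span_add[OF 1 2] e by simp
    qed
  qed
  then show ?thesis using C V.finite_Basis
    by (intro exI[of _ "(\<lambda>(a,b). del a b) ` (C \<times> B)"]) auto
qed


lemma key:
  fixes sc :: "'k::field \<Rightarrow> 'v::ab_group_add \<Rightarrow> 'v" and M :: "'g::group_add set"
    and p :: "'g \<Rightarrow> ('g \<Rightarrow> 'v) \<Rightarrow> 'v"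
  assumes fd: "finite_dimensional_vector_space sc Bas"
    and cnt: "countable (UNIV::'g set)"
    and M: "finite M"
    and p: "\<And>h. p h \<in> lin_maps sc M"
    and inj: "inj (sigma M p)"
  shows "\<exists>N. finite N \<and> (\<forall>y. (\<forall>h\<in>N. sigma M p y h = 0) \<longrightarrow> y 0 = 0)"
proof (rule ccontr)
  assume H: "\<not> ?thesis"
  interpret V: finite_dimensional_vector_space sc Bas by fact
  interpret VF: vector_space "\<lambda>c (x::'g \<Rightarrow> 'v) h. sc c (x h)"
    by (rule vs_fun) unfold_locales
  define e where "e = from_nat_into (UNIV::'g set)"
  have e_surj: "range e = UNIV" using cnt by (simp add: e_def)
  define Bn where "Bn n = insert 0 (e ` {..n})" for n
  define C where "C n = Bn n \<union> (\<Union>b\<in>Bn n. (\<lambda>m. b + m) ` M)" for n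
  define X where "X r = {y. \<forall>h\<in>Bn r. sigma M p y h = 0}" for r
  define L where "L n r = restr (C n) ` X r" for n r
  have finBn: "finite (Bn n)" for n by (simp add: Bn_def)
  have finC: "finite (C n)" for n using finBn M by (simp add: C_def)
  have monoBn: "n \<le> m \<Longrightarrow> Bn n \<subseteq> Bn m" for n m by (auto simp: Bn_def)
  have monoC: "n \<le> m \<Longrightarrow> C n \<subseteq> C m" for n m using monoBn[of n m] by (auto simp: C_def)
  have inBn: "\<exists>n. h \<in> Bn n" for h
  proof -
    obtain k where "h = e k" using e_surj by (metis UNIV_I image_iff)
    then show ?thesis by (auto simp: Bn_def)
  qed
  have BnC: "Bn n \<subseteq> C n" for n by (auto simp: C_def)
  have 0: "0 \<in> C 0" by (auto simp: C_def Bn_def)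
  have BnM: "h \<in> Bn n \<Longrightarrow> m \<in> M \<Longrightarrow> h + m \<in> C n" for h m n by (auto simp: C_def)
  have subX: "VF.subspace (X r)" for r
    unfolding VF.subspace_def X_def
    by (auto simp: sigma_add[OF p] sigma_scale[OF p] sigma_zero[OF p])
  have antiX: "r \<le> r' \<Longrightarrow> X r' \<subseteq> X r" for r r' using monoBn by (auto simp: X_def)
  have restr_add: "restr A (x + y) = restr A x + restr A y" for A and x y :: "'g \<Rightarrow> 'v"
    by (auto simp: restr_def fun_eq_iff)
  have restr_scale: "restr A (\<lambda>h. sc c (x h)) = (\<lambda>h. sc c (restr A x h))" for A c and x :: "'g \<Rightarrow> 'v"
    by (auto simp: restr_def fun_eq_iff)
  have restr_zero: "restr A (0::'g \<Rightarrow> 'v) = 0" for A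
    by (auto simp: restr_def fun_eq_iff)
  have restr_restr: "A \<subseteq> A' \<Longrightarrow> restr A (restr A' x) = restr A x" for A A' and x :: "'g \<Rightarrow> 'v"
    by (auto simp: restr_def fun_eq_iff)
  have subL: "VF.subspace (L n r)" for n r
  proof -
    have "0 \<in> L n r" unfolding L_def using VF.subspace_0[OF subX[of r]] restr_zero
      by (metis image_eqI)
    moreover have "x + y \<in> L n r" if xy: "x \<in> L n r" "y \<in> L n r" for x y
    proof -
      obtain x' y' where "x' \<in> X r" "y' \<in> X r" "x = restr (C n) x'" "y = restr (C n) y'"
        using xy unfolding L_def by blast
      then show ?thesis unfolding L_def using VF.subspace_add[OF subX[of r]] restr_add
        by (metis image_eqI)
    qed
    moreover have "(\<lambda>h. sc c (x h)) \<in> L n r" if xx: "x \<in> L n r" for x c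
    proof -
      obtain x' where "x' \<in> X r" "x = restr (C n) x'"
        using xx unfolding L_def by blast
      then show ?thesis unfolding L_def using VF.subspace_scale[OF subX[of r]] restr_scale
        by (metis image_eqI)
    qed
    ultimately show ?thesis unfolding VF.subspace_def by blast
  qed
  have antiL: "r \<le> r' \<Longrightarrow> L n r' \<subseteq> L n r" for n r r' using antiX unfolding L_def by blast
  have spanL: "\<exists>W. finite W \<and> (\<forall>r. L n r \<subseteq> VF.span W)" for n
  proof -
    obtain W where W: "finite W" "{x::'g \<Rightarrow> 'v. \<forall>h. h \<notin> C n \<longrightarrow> x h = 0} \<subseteq> VF.span W"
      using fin_span[OF fd finC[of n]] by blast
    have "L n r \<subseteq> {x::'g \<Rightarrow> 'v. \<forall>h. h \<notin> C n \<longrightarrow> x h = 0}" for r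
      by (auto simp: L_def restr_def)
    then have "\<forall>r. L n r \<subseteq> VF.span W" using W(2) by (meson order_trans)
    then show ?thesis using W(1) by blast
  qed
  have stab: "\<exists>R. \<forall>r\<ge>R. L n r = L n R" for n
  proof -
    obtain W where W: "finite W" "\<forall>r. L n r \<subseteq> VF.span W" using spanL by blast
    obtain R where R: "\<forall>r. VF.dim (L n R) \<le> VF.dim (L n r)"
      using ex_has_least_nat[of "\<lambda>_. True" 0 "\<lambda>r. VF.dim (L n r)"] by blast
    have "L n r = L n R" if "r \<ge> R" for r
      using VF.subspace_eq_dim_fin[OF subL[of n r] subL[of n R] antiL[OF that] W(2)[rule_format, of R] W(1) R[rule_format, of r]] .
    then show ?thesis by blast
  qed
  then obtain R where R: "\<And>n r. r \<ge> R n \<Longrightarrow> L n r = L n (R n)"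
    by metis
  define Ls where "Ls n = L n (R n)" for n
  have ext: "\<exists>z'\<in>Ls (Suc n). restr (C n) z' = z" if "z \<in> Ls n" for z n
  proof -
    define r where "r = max (R n) (R (Suc n))"
    have "z \<in> L n r" using that R[of n r] by (simp add: Ls_def r_def)
    then obtain y where y: "y \<in> X r" "z = restr (C n) y" by (auto simp: L_def)
    have "restr (C (Suc n)) y \<in> Ls (Suc n)" using y R[of "Suc n" r] by (auto simp: Ls_def r_def L_def)
    moreover have "restr (C n) (restr (C (Suc n)) y) = z" using y restr_restr monoC by simp
    ultimately show ?thesis by blast
  qed
  have init: "\<exists>z\<in>Ls 0. z 0 \<noteq> 0"
  proof -
    obtain y where y: "\<forall>h\<in>Bn (R 0). sigma M p y h = 0" "y 0 \<noteq> 0"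
      using H finBn[of "R 0"] by blast
    then have "restr (C 0) y \<in> Ls 0" by (auto simp: Ls_def L_def X_def)
    moreover have "restr (C 0) y 0 \<noteq> 0" using y 0 by (simp add: restr_def)
    ultimately show ?thesis by blast
  qed
  define z0 where "z0 = (SOME z. z \<in> Ls 0 \<and> z 0 \<noteq> 0)"
  have z0: "z0 \<in> Ls 0" "z0 0 \<noteq> 0" using someI_ex[OF init[unfolded Bex_def]] by (auto simp: z0_def)
  define zs where "zs = rec_nat z0 (\<lambda>n z. SOME z'. z' \<in> Ls (Suc n) \<and> restr (C n) z' = z)"
  have zs0: "zs 0 = z0" by (simp add: zs_def)
  have zsS: "zs (Suc n) = (SOME z'. z' \<in> Ls (Suc n) \<and> restr (C n) z' = zs n)" for n
    by (simp add: zs_def)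
  have zsL: "zs n \<in> Ls n \<and> (\<forall>m<n. restr (C m) (zs (Suc m)) = zs m)" for n
  proof (induction n)
    case 0 then show ?case using z0 zs0 by simp
  next
    case (Suc n)
    have "zs (Suc n) \<in> Ls (Suc n) \<and> restr (C n) (zs (Suc n)) = zs n"
      unfolding zsS[of n] using someI_ex[OF ext[OF Suc[THEN conjunct1], unfolded Bex_def]] .
    then show ?case using Suc less_Suc_eq by auto
  qed
  have compat: "n \<le> m \<Longrightarrow> restr (C n) (zs m) = zs n" for n m
  proof (induction m rule: dec_induct)
    case base
    have "zs n \<in> Ls n" using zsL by blast
    then show ?case by (auto simp: Ls_def L_def restr_def fun_eq_iff)
  next
    case (step m)
    have "restr (C n) (zs (Suc m)) = restr (C n) (restr (C m) (zs (Suc m)))"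
      using restr_restr[OF monoC[OF step(1)]] by simp
    also have "\<dots> = restr (C n) (zs m)" using zsL[of "Suc m"] by simp
    finally show ?case using step by simp
  qed
  have agree: "h \<in> C n \<Longrightarrow> h \<in> C m \<Longrightarrow> zs n h = zs m h" for h n m
  proof -
    assume a: "h \<in> C n" "h \<in> C m"
    have "zs n h = restr (C n) (zs (max n m)) h" using compat[of n "max n m"] by simp
    also have "\<dots> = zs (max n m) h" using a by (simp add: restr_def)
    also have "\<dots> = restr (C m) (zs (max n m)) h" using a by (simp add: restr_def)
    also have "\<dots> = zs m h" using compat[of m "max n m"] by simp
    finally show ?thesis .
  qed
  define y where "y h = zs (SOME n. h \<in> C n) h" for h
  have yC: "h \<in> C n \<Longrightarrow> y h = zs n h" for h n
  proof -
    assume a: "h \<in> C n"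
    then have "h \<in> C (SOME n. h \<in> C n)" by (rule someI)
    then show ?thesis unfolding y_def using agree[OF _ a] by blast
  qed
  have ysig: "sigma M p y h = 0" for h
  proof -
    obtain n where n: "h \<in> Bn n" using inBn by blast
    define r where "r = max n (R n)"
    have "zs n \<in> L n r" using zsL[of n] R[of n r] by (simp add: Ls_def r_def)
    then obtain y' where y': "y' \<in> X r" "zs n = restr (C n) y'" by (auto simp: L_def)
    have "y' \<in> X n" using y'(1) antiX[of n r] by (auto simp: r_def)
    then have 1: "sigma M p y' h = 0" using n by (simp add: X_def)
    have "\<forall>m\<in>M. y (h + m) = y' (h + m)"
    proof
      fix m assume m: "m \<in> M"
      have hm: "h + m \<in> C n" using BnM[OF n m] .
      have "y (h + m) = zs n (h + m)" using yC[OF hm] .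
      also have "\<dots> = y' (h + m)" using hm y'(2) by (simp add: restr_def)
      finally show "y (h + m) = y' (h + m)" .
    qed
    then show ?thesis using sigma_local 1 by metis
  qed
  have "sigma M p y = sigma M p 0" using ysig sigma_zero[OF p] by (simp add: fun_eq_iff)
  then have "y = 0" using inj by (simp add: inj_def)
  moreover have "y 0 \<noteq> 0" using yC[OF 0] zs0 z0 by simp
  ultimately show False by simp
qed


theorem lemma4p1:
  fixes sc :: "'k::field \<Rightarrow> 'v::ab_group_add \<Rightarrow> 'v"
    and M :: "'g::group_add set"
    and s :: "'g \<Rightarrow> ('g \<Rightarrow> 'v) \<Rightarrow> 'v"
    and tau :: "('g \<Rightarrow> 'v) \<Rightarrow> ('g \<Rightarrow> 'v)"
  assumes fg: "finitely_generated_group TYPE('g)"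
    and inf: "infinite (UNIV :: 'g set)"
    and fdim: "\<exists>B. finite_dimensional_vector_space sc B"
    and M: "finite M"
    and s_in: "\<And>g. s g \<in> lin_maps sc M"
    and s_const: "\<exists>E c. finite E \<and> (\<forall>g. g \<notin> E \<longrightarrow> s g = c)"
    and tau: "tau = sigma M s"
    and stinj: "stably_injective sc M s"
  shows "\<exists>N::'g set. finite N \<and>
           (\<forall>d \<in> range tau. \<forall>d' \<in> range tau. \<forall>g.
              (\<forall>n \<in> N. d (g + n) = d' (g + n)) \<longrightarrow> inv tau d g = inv tau d' g)"
proof -
  obtain Bas where fd: "finite_dimensional_vector_space sc Bas" using fdim by blast
  have cnt: "countable (UNIV :: 'g set)" using fg_countable[OF fg] .
  obtain E c where E: "finite E" "\<forall>g. g \<notin> E \<longrightarrow> s g = c" using s_const by blast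
  obtain g0 where "g0 \<notin> E" using inf E(1) ex_new_if_finite by blast
  then have cS: "c \<in> lin_maps sc M" using E s_in by metis
  have orb_g: "(\<lambda>h. s (g + h)) \<in> orbit_closure (lin_maps sc M) s" for g
  proof (rule orbit_closureI[OF s_in s_in])
    fix F :: "'g set"
    show "\<exists>g'. \<forall>i\<in>F. shift g' s i = s (g + i)"
      by (intro exI[of _ "- g"]) (simp add: shift_def)
  qed
  have orb_c: "(\<lambda>_. c) \<in> orbit_closure (lin_maps sc M) s"
  proof (rule orbit_closureI[OF s_in cS])
    fix F :: "'g set" assume F: "finite F"
    have "finite (\<Union>i\<in>F. (\<lambda>e. i + - e) ` E)" using F E(1) by simp
    then obtain g where g: "g \<notin> (\<Union>i\<in>F. (\<lambda>e. i + - e) ` E)" using inf ex_new_if_finite by blast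
    have "s (- g + i) = c" if i: "i \<in> F" for i
    proof -
      have "- g + i \<notin> E"
      proof
        assume "- g + i \<in> E"
        moreover have "g = i + - (- g + i)" by (simp add: minus_add add.assoc)
        ultimately show False using g i by blast
      qed
      then show ?thesis using E(2) by blast
    qed
    then show "\<exists>g. \<forall>i\<in>F. shift g s i = c" by (auto simp: shift_def)
  qed
  have injc: "inj (sigma M (\<lambda>_. c))" using stinj orb_c by (simp add: stably_injective_def)
  have injg: "inj (sigma M (\<lambda>h. s (g + h)))" for g using stinj orb_g by (simp add: stably_injective_def)
  have injs: "inj tau" using injg[of 0] tau by simp
  obtain Nc where Nc: "finite Nc" "\<forall>y. (\<forall>h\<in>Nc. sigma M (\<lambda>_. c) y h = 0) \<longrightarrow> y 0 = 0"
    using key[OF fd cnt M _ injc] cS by blast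
  have "\<forall>g. \<exists>N. finite N \<and> (\<forall>y. (\<forall>h\<in>N. sigma M (\<lambda>h. s (g + h)) y h = 0) \<longrightarrow> y 0 = 0)"
    using key[OF fd cnt M s_in injg] by blast
  then obtain Ng where Ng: "\<And>g. finite (Ng g)"
    "\<And>g y. (\<forall>h\<in>Ng g. sigma M (\<lambda>h. s (g + h)) y h = 0) \<Longrightarrow> y 0 = 0"
    by metis
  define D where "D = (\<Union>h\<in>Nc. (\<lambda>e. e + - h) ` E)"
  have finD: "finite D" using Nc(1) E(1) by (simp add: D_def)
  define N where "N = Nc \<union> (\<Union>g\<in>D. Ng g)"
  have finN: "finite N" using finD Ng(1) Nc(1) by (simp add: N_def)
  have loc: "x g = 0" if x: "\<forall>n\<in>N. tau x (g + n) = 0" for x g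
  proof -
    define x' where "x' h = x (g + h)" for h
    have sh: "sigma M (\<lambda>h. s (g + h)) x' h = tau x (g + h)" for h
      using sigma_shift[of M s g x h] tau by (simp add: x'_def[abs_def])
    show ?thesis
    proof (cases "g \<in> D")
      case True
      have "\<forall>h\<in>Ng g. sigma M (\<lambda>h. s (g + h)) x' h = 0"
        using x True sh by (auto simp: N_def)
      then have "x' 0 = 0" by (rule Ng(2))
      then show ?thesis by (simp add: x'_def)
    next
      case False
      have "\<forall>h\<in>Nc. sigma M (\<lambda>_. c) x' h = 0"
      proof
        fix h assume h: "h \<in> Nc"
        have "g + h \<notin> E"
        proof
          assume "g + h \<in> E"
          moreover have "g = (g + h) + - h" by (simp add: add.assoc)
          ultimately have "g \<in> (\<lambda>e. e + - h) ` E" by (metis image_eqI)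
          then show False using False h unfolding D_def by blast
        qed
        then have "s (g + h) = c" using E(2) by blast
        then have "sigma M (\<lambda>_. c) x' h = sigma M (\<lambda>h. s (g + h)) x' h"
          by (simp add: sigma_def)
        also have "\<dots> = 0" using sh x h by (simp add: N_def)
        finally show "sigma M (\<lambda>_. c) x' h = 0" .
      qed
      then have "x' 0 = 0" using Nc(2) by blast
      then show ?thesis by (simp add: x'_def)
    qed
  qed
  show ?thesis
  proof (intro exI[of _ N] conjI finN ballI allI impI)
    fix d d' g
    assume d: "d \<in> range tau" and d': "d' \<in> range tau"
      and agr: "\<forall>n\<in>N. d (g + n) = d' (g + n)"
    obtain x where x: "d = tau x" using d by blast
    obtain x' where x': "d' = tau x'" using d' by blast
    have "\<forall>n\<in>N. tau (x - x') (g + n) = 0"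
      using agr x x' tau sigma_diff[OF s_in] by simp
    then have "(x - x') g = 0" by (rule loc)
    then have "x g = x' g" by simp
    then show "inv tau d g = inv tau d' g" using x x' injs by simp
  qed
qed

end
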